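(* Let $G$ be a topological groupoid on the space $X=O_G$ whose underlying groupoid is compatible locally trivial (with respect to an open cover $\{U_{i}\}$ of $X$ and local sections $s_{x,i}\colon U_{i}\rightarrow G_x$ as in the context), and let $W$ be an open subset of $G$ containing all identities $1_x$, $x\in X$. Suppose that every local section $s_{x,i}$ has image in $W$, i.e. $s_{x,i}(U_i)\subseteq W$. Then the monodromy groupoid $M(G,W)$ (a groupoid on $X$) is compatible locally trivial.
   Context: Groupoid conventions: a groupoid $G$ on object set $O_G$ has source and target maps $\alpha,\beta\colon G\rightarrow O_G$, identities $1_x$; the product $ab$ is defined iff $\beta(a)=\alpha(b)$. $G(x,y)$ denotes elements from $x$ to $y$; the star of $x$ is $G_x=\{a\in G\colon\alpha(a)=x\}$. A topological groupoid is a groupoid with topologies on $G$ and $O_G$ making source, target, identity map, inversion and partial multiplication continuous. Compatible locally trivial: Let $X$ be a topological space and $G$ a groupoid on $X$. Suppose $\mathcal U=\{U_i\colon i\in I\}$ is an open cover of $X$ which is also a base for its topology, and for each $i$ and each $x\in U_i$ there is a map (local section about $x$) $s_{x,i}\colon U_i\to G_x$ with $\beta(s_{x,i}(y))=y$ for $y\in U_i$ and $s_{x,i}(x)=1_x$. $G$ is compatible locally trivial if for every $x$ and any two local sections $s_{x,i}, s_{x,j}$ about $x$ there is $V_{ij}\in\mathcal U$ with $x\in V_{ij}\subseteq U_i\cap U_j$ and $s_{x,i}|_{V_{ij}}=s_{x,j}|_{V_{ij}}$. Monodromy groupoid: for a groupoid $G$ and a subset $W\subseteq G$ containing all identities, let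 $F(W)$ be the free groupoid on the graph $W$ (objects $O_G$, an edge $[a]\colon\alpha(a)\to\beta(a)$ for each $a\in W$), and $N$ the normal subgroupoid of $F(W)$ generated by the elements $[a][b][ab]^{-1}$ for all $a,b\in W$ with $\beta(a)=\alpha(b)$ and $ab\in W$. Then $M(G,W)=F(W)/N$, a groupoid on $O_G$; the map $\widetilde\imath\colon W\to M(G,W)$, $a\mapsto$ class of $[a]$, is injective. *)

theory Defs
  imports "HOL-Analysis.Analysis"
begin

text \<open>A groupoid with object set gobj and arrow set garr; source alpha = gsrc,
  target beta = gtgt, identities gid, inversion ginv, and the partial product
  gmul a b defined (meaningfully) iff gtgt a = gsrc b.\<close>

record ('x, 'g) groupoid =
  gobj :: "'x set"
  garr :: "'g set"
  gsrc :: "'g \<Rightarrow> 'x"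
  gtgt :: "'g \<Rightarrow> 'x"
  gid  :: "'x \<Rightarrow> 'g"
  ginv :: "'g \<Rightarrow> 'g"
  gmul :: "'g \<Rightarrow> 'g \<Rightarrow> 'g"

definition is_groupoid :: "('x, 'g, 'm) groupoid_scheme \<Rightarrow> bool" where
  "is_groupoid G \<longleftrightarrow>
     (\<forall>a\<in>garr G. gsrc G a \<in> gobj G \<and> gtgt G a \<in> gobj G) \<and>
     (\<forall>x\<in>gobj G. gid G x \<in> garr G \<and> gsrc G (gid G x) = x \<and> gtgt G (gid G x) = x) \<and>
     (\<forall>a\<in>garr G. \<forall>b\<in>garr G. gtgt G a = gsrc G b \<longrightarrow>
        gmul G a b \<in> garr G \<and> gsrc G (gmul G a b) = gsrc G a \<and> gtgt G (gmul G a b) = gtgt G b) \<and>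
     (\<forall>a\<in>garr G. \<forall>b\<in>garr G. \<forall>c\<in>garr G. gtgt G a = gsrc G b \<and> gtgt G b = gsrc G c \<longrightarrow>
        gmul G (gmul G a b) c = gmul G a (gmul G b c)) \<and>
     (\<forall>a\<in>garr G. gmul G (gid G (gsrc G a)) a = a \<and> gmul G a (gid G (gtgt G a)) = a) \<and>
     (\<forall>a\<in>garr G. ginv G a \<in> garr G \<and> gsrc G (ginv G a) = gtgt G a \<and> gtgt G (ginv G a) = gsrc G a \<and>
        gmul G a (ginv G a) = gid G (gsrc G a) \<and> gmul G (ginv G a) a = gid G (gtgt G a))"

definition topological_groupoid ::
  "'g topology \<Rightarrow> 'x topology \<Rightarrow> ('x, 'g, 'm) groupoid_scheme \<Rightarrow> bool" where
  "topological_groupoid TG TX G \<longleftrightarrow>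
     is_groupoid G \<and> topspace TG = garr G \<and> topspace TX = gobj G \<and>
     continuous_map TG TX (gsrc G) \<and> continuous_map TG TX (gtgt G) \<and>
     continuous_map TX TG (gid G) \<and> continuous_map TG TG (ginv G) \<and>
     continuous_map
       (subtopology (prod_topology TG TG) {(a, b). a \<in> garr G \<and> b \<in> garr G \<and> gtgt G a = gsrc G b})
       TG (\<lambda>(a, b). gmul G a b)"

definition compatible_locally_trivial_wrt ::
  "'x topology \<Rightarrow> ('x, 'g, 'm) groupoid_scheme \<Rightarrow> 'i set \<Rightarrow> ('i \<Rightarrow> 'x set)
     \<Rightarrow> ('x \<Rightarrow> 'i \<Rightarrow> 'x \<Rightarrow> 'g) \<Rightarrow> bool" where
  "compatible_locally_trivial_wrt TX G I U s \<longleftrightarrow>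
     is_groupoid G \<and> gobj G = topspace TX \<and>
     (\<forall>i\<in>I. openin TX (U i)) \<and>
     (\<Union>i\<in>I. U i) = topspace TX \<and>
     (\<forall>V. openin TX V \<longrightarrow> (\<forall>x\<in>V. \<exists>i\<in>I. x \<in> U i \<and> U i \<subseteq> V)) \<and>
     (\<forall>i\<in>I. \<forall>x\<in>U i.
        (\<forall>y\<in>U i. s x i y \<in> garr G \<and> gsrc G (s x i y) = x \<and> gtgt G (s x i y) = y) \<and>
        s x i x = gid G x) \<and>
     (\<forall>x \<in> topspace TX. \<forall>i\<in>I. \<forall>j\<in>I. x \<in> U i \<and> x \<in> U j \<longrightarrow>
        (\<exists>k\<in>I. x \<in> U k \<and> U k \<subseteq> U i \<inter> U j \<and> (\<forall>y\<in>U k. s x i y = s x j y)))"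

text \<open>Elements of the free groupoid F(W) are represented by paths (x, w, y): a word w of
  letters (a, True) = [a] and (a, False) = [a]^{-1}, a in W, composable from x to y
  (the empty word at x being the identity at x). F(W) is the quotient by free reduction;
  M(G,W) = F(W)/N where N is the normal subgroupoid generated by [a][b][ab]^{-1}.
  Concretely, M(G,W) is the quotient of paths by the congruence generated by free
  cancellation and by [a][b] ~ [ab] (for a, b, ab in W composable).\<close>

type_synonym ('x, 'g) wpath = "'x \<times> ('g \<times> bool) list \<times> 'x"

fun wvalid :: "('x, 'g, 'm) groupoid_scheme \<Rightarrow> 'g set \<Rightarrow> 'x \<Rightarrow> ('g \<times> bool) list \<Rightarrow> 'x \<Rightarrow> bool" where
  "wvalid G W x [] y \<longleftrightarrow> x = y \<and> x \<in> gobj G"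
| "wvalid G W x ((a, True) # w) y \<longleftrightarrow> a \<in> W \<and> gsrc G a = x \<and> wvalid G W (gtgt G a) w y"
| "wvalid G W x ((a, False) # w) y \<longleftrightarrow> a \<in> W \<and> gtgt G a = x \<and> wvalid G W (gsrc G a) w y"

definition wpaths :: "('x, 'g, 'm) groupoid_scheme \<Rightarrow> 'g set \<Rightarrow> ('x, 'g) wpath set" where
  "wpaths G W = {(x, w, y). wvalid G W x w y}"

inductive mstep :: "('x, 'g, 'm) groupoid_scheme \<Rightarrow> 'g set \<Rightarrow> ('x, 'g) wpath \<Rightarrow> ('x, 'g) wpath \<Rightarrow> bool"
  for G W where
  cancel: "wvalid G W x (u @ [(a, d), (a, \<not> d)] @ v) y \<Longrightarrow>
             mstep G W (x, u @ [(a, d), (a, \<not> d)] @ v, y) (x, u @ v, y)"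
| compose: "wvalid G W x (u @ [(a, True), (b, True)] @ v) y \<Longrightarrow> gmul G a b \<in> W \<Longrightarrow>
             mstep G W (x, u @ [(a, True), (b, True)] @ v, y) (x, u @ [(gmul G a b, True)] @ v, y)"

definition mequiv :: "('x, 'g, 'm) groupoid_scheme \<Rightarrow> 'g set \<Rightarrow> ('x, 'g) wpath \<Rightarrow> ('x, 'g) wpath \<Rightarrow> bool" where
  "mequiv G W = (\<lambda>p q. mstep G W p q \<or> mstep G W q p)\<^sup>*\<^sup>*"

definition mclass :: "('x, 'g, 'm) groupoid_scheme \<Rightarrow> 'g set \<Rightarrow> ('x, 'g) wpath \<Rightarrow> ('x, 'g) wpath set" where
  "mclass G W p = {q. mequiv G W p q}"

definition mrep :: "('x, 'g) wpath set \<Rightarrow> ('x, 'g) wpath" where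
  "mrep C = (SOME p. p \<in> C)"

fun wrev :: "('g \<times> bool) list \<Rightarrow> ('g \<times> bool) list" where
  "wrev w = rev (map (\<lambda>(a, d). (a, \<not> d)) w)"

definition monodromy ::
  "('x, 'g, 'm) groupoid_scheme \<Rightarrow> 'g set \<Rightarrow> ('x, ('x, 'g) wpath set) groupoid" where
  "monodromy G W =
     \<lparr> gobj = gobj G,
       garr = mclass G W ` wpaths G W,
       gsrc = (\<lambda>C. fst (mrep C)),
       gtgt = (\<lambda>C. snd (snd (mrep C))),
       gid = (\<lambda>x. mclass G W (x, [], x)),
       ginv = (\<lambda>C. case mrep C of (x, w, y) \<Rightarrow> mclass G W (y, wrev w, x)),
       gmul = (\<lambda>C D. case mrep C of (x, w, y) \<Rightarrow> (case mrep D of (y', v, z) \<Rightarrow>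
                  mclass G W (x, w @ v, z))) \<rparr>"

end

theory Submission
  imports Defs
begin

lemma wvalid_Cons:
  "wvalid G W x ((a,d)#w) y \<longleftrightarrow> a \<in> W \<and>
     (if d then gsrc G a = x \<and> wvalid G W (gtgt G a) w y else gtgt G a = x \<and> wvalid G W (gsrc G a) w y)"
  by (cases d) auto

context
  fixes G :: "('x, 'g, 'm) groupoid_scheme" and W :: "'g set"
  assumes grp: "is_groupoid G" and WG: "W \<subseteq> garr G"
begin

lemma W_obj[simp]: "a \<in> W \<Longrightarrow> gsrc G a \<in> gobj G \<and> gtgt G a \<in> gobj G"
  using grp WG unfolding is_groupoid_def by blast

lemma wvalid_obj: "wvalid G W x w y \<Longrightarrow> x \<in> gobj G \<and> y \<in> gobj G"
proof (induction w arbitrary: x)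
  case Nil then show ?case by auto
next
  case (Cons p w)
  obtain a d where p: "p = (a,d)" by force
  show ?case using Cons grp WG unfolding p is_groupoid_def
    by (auto simp: wvalid_Cons split: if_splits)
qed

lemma wvalid_append:
  "wvalid G W x (u @ v) z \<longleftrightarrow> (\<exists>y. wvalid G W x u y \<and> wvalid G W y v z)"
proof (induction u arbitrary: x)
  case Nil then show ?case using wvalid_obj by auto
next
  case (Cons p u)
  obtain a d where p: "p = (a,d)" by force
  show ?case using Cons unfolding p by (auto simp: wvalid_Cons)
qed

lemma wrev_valid: "wvalid G W x w y \<Longrightarrow> wvalid G W y (wrev w) x"
proof (induction w arbitrary: x)
  case Nil then show ?case by auto
next
  case (Cons p w)
  obtain a d where p: "p = (a,d)" by force
  have e: "wrev (p # w) = wrev w @ [(a, \<not> d)]" using p by simp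
  show ?case using Cons wvalid_obj unfolding e p
    by (auto simp: wvalid_append wvalid_Cons split: if_splits)
qed

lemma wrev_wrev: "wrev (wrev w) = w"
  by (induction w) (auto simp: rev_map)

lemma mstep_valid:
  assumes "mstep G W p q"
  shows "p \<in> wpaths G W \<and> q \<in> wpaths G W \<and> fst p = fst q \<and> snd (snd p) = snd (snd q)"
  using assms
proof cases
  case (cancel x u a d v y)
  then show ?thesis
    by (cases d) (auto simp: wpaths_def wvalid_append)
next
  case (compose x u a b v y)
  then show ?thesis using grp WG unfolding is_groupoid_def
    by (auto simp: wpaths_def wvalid_append) (metis subsetD)+
qed


lemma mequiv_refl: "mequiv G W p p"
  unfolding mequiv_def by simp

lemma mequiv_sym: "mequiv G W p q \<Longrightarrow> mequiv G W q p"
  unfolding mequiv_def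
  by (induction rule: rtranclp_induct)
     (auto intro: converse_rtranclp_into_rtranclp)

lemma mequiv_trans: "mequiv G W p q \<Longrightarrow> mequiv G W q r \<Longrightarrow> mequiv G W p r"
  unfolding mequiv_def by simp

lemma mequiv_valid:
  "mequiv G W p q \<Longrightarrow> p \<in> wpaths G W \<Longrightarrow>
     q \<in> wpaths G W \<and> fst p = fst q \<and> snd (snd p) = snd (snd q)"
  unfolding mequiv_def
  by (induction rule: rtranclp_induct) (auto dest!: mstep_valid)

lemma mstep_ctx:
  assumes "mstep G W (x, w, y) (x', w', y')" "wvalid G W x0 u x" "wvalid G W y v z"
  shows "mstep G W (x0, u @ w @ v, z) (x0, u @ w' @ v, z)"
  using assms(1)
proof cases
  case (cancel u1 a d v1)
  have "wvalid G W x0 (u @ w @ v) z"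
    using assms(2,3) cancel wvalid_append by blast
  then have "wvalid G W x0 ((u @ u1) @ [(a, d), (a, \<not> d)] @ (v1 @ v)) z"
    using cancel by simp
  from mstep.cancel[OF this] show ?thesis using cancel by simp
next
  case (compose u1 a b v1)
  have "wvalid G W x0 (u @ w @ v) z"
    using assms(2,3) compose wvalid_append by blast
  then have "wvalid G W x0 ((u @ u1) @ [(a, True), (b, True)] @ (v1 @ v)) z"
    using compose by simp
  from mstep.compose[OF this] show ?thesis using compose by simp
qed

lemma mequiv_ctx_gen:
  assumes "mequiv G W p q" "p = (x, w, y)" "wvalid G W x w y"
    "wvalid G W x0 u x" "wvalid G W y v z"
  shows "mequiv G W (x0, u @ w @ v, z) (x0, u @ fst (snd q) @ v, z)"
  using assms(1) unfolding mequiv_def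
proof (induction rule: rtranclp_induct)
  case base then show ?case using assms by simp
next
  case (step q r)
  have pv: "p \<in> wpaths G W" using assms by (simp add: wpaths_def)
  from step(1) pv have "q \<in> wpaths G W \<and> fst q = x \<and> snd (snd q) = y"
    using mequiv_valid[of p q] assms(2) unfolding mequiv_def by auto
  then obtain wq where q: "q = (x, wq, y)" by (cases q) auto
  obtain xr wr yr where r0: "r = (xr, wr, yr)" by (cases r)
  have "xr = x \<and> yr = y"
    using step(2) mstep_valid[of q r] mstep_valid[of r q] q r0 by auto
  then have r: "r = (x, wr, y)" using r0 by simp
  from step(2) have "mstep G W (x0, u @ wq @ v, z) (x0, u @ wr @ v, z) \<or>
      mstep G W (x0, u @ wr @ v, z) (x0, u @ wq @ v, z)"
    unfolding q r using mstep_ctx assms(4,5) by blast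
  then have st: "(\<lambda>p q. mstep G W p q \<or> mstep G W q p) (x0, u @ wq @ v, z) (x0, u @ wr @ v, z)"
    by blast
  have ih: "(\<lambda>p q. mstep G W p q \<or> mstep G W q p)\<^sup>*\<^sup>* (x0, u @ w @ v, z) (x0, u @ wq @ v, z)"
    using step(3) q by simp
  show ?case using rtranclp.rtrancl_into_rtrancl[OF ih st] r by simp
qed

lemma mequiv_ctx:
  assumes "mequiv G W (x, w, y) (x', w', y')" "wvalid G W x w y"
    "wvalid G W x0 u x" "wvalid G W y v z"
  shows "mequiv G W (x0, u @ w @ v, z) (x0, u @ w' @ v, z)"
  using mequiv_ctx_gen[OF assms(1) refl assms(2-4)] by simp

lemma mclass_eq: "mequiv G W p q \<Longrightarrow> mclass G W p = mclass G W q"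
  unfolding mclass_def using mequiv_sym mequiv_trans by blast

lemma mrep_class:
  assumes "wvalid G W x w y"
  shows "\<exists>w'. mrep (mclass G W (x, w, y)) = (x, w', y) \<and> wvalid G W x w' y \<and>
           mequiv G W (x, w, y) (x, w', y)"
proof -
  have "mrep (mclass G W (x, w, y)) \<in> mclass G W (x, w, y)"
    unfolding mrep_def by (rule someI[of _ "(x,w,y)"]) (simp add: mclass_def mequiv_refl)
  then have e: "mequiv G W (x, w, y) (mrep (mclass G W (x, w, y)))" by (simp add: mclass_def)
  then have "mrep (mclass G W (x, w, y)) \<in> wpaths G W \<and> fst (mrep (mclass G W (x, w, y))) = x
     \<and> snd (snd (mrep (mclass G W (x, w, y)))) = y"
    using mequiv_valid assms by (fastforce simp: wpaths_def)
  then show ?thesis using e by (cases "mrep (mclass G W (x, w, y))") (auto simp: wpaths_def)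
qed

lemma mul_class:
  assumes "wvalid G W x w y" "wvalid G W y v z"
  shows "gmul (monodromy G W) (mclass G W (x, w, y)) (mclass G W (y, v, z)) = mclass G W (x, w @ v, z)"
proof -
  obtain w1 where w1: "mrep (mclass G W (x, w, y)) = (x, w1, y)" "wvalid G W x w1 y"
      "mequiv G W (x, w, y) (x, w1, y)" using mrep_class[OF assms(1)] by blast
  obtain v1 where v1: "mrep (mclass G W (y, v, z)) = (y, v1, z)" "wvalid G W y v1 z"
      "mequiv G W (y, v, z) (y, v1, z)" using mrep_class[OF assms(2)] by blast
  have ox: "wvalid G W x [] x" "wvalid G W z [] z" using wvalid_obj assms by auto
  have "mequiv G W (x, [] @ w @ v, z) (x, [] @ w1 @ v, z)"
    by (rule mequiv_ctx[OF w1(3) assms(1) ox(1) assms(2)])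
  moreover have "mequiv G W (x, w1 @ v @ [], z) (x, w1 @ v1 @ [], z)"
    by (rule mequiv_ctx[OF v1(3) assms(2) w1(2) ox(2)])
  ultimately have "mequiv G W (x, w @ v, z) (x, w1 @ v1, z)" using mequiv_trans by simp
  then show ?thesis using w1 v1 by (simp add: monodromy_def mclass_eq)
qed

lemma src_class: "wvalid G W x w y \<Longrightarrow> gsrc (monodromy G W) (mclass G W (x, w, y)) = x"
  using mrep_class by (force simp: monodromy_def)

lemma tgt_class: "wvalid G W x w y \<Longrightarrow> gtgt (monodromy G W) (mclass G W (x, w, y)) = y"
  using mrep_class by (force simp: monodromy_def)

lemma cancel_wrev: "wvalid G W x w y \<Longrightarrow> mequiv G W (x, w @ wrev w, x) (x, [], x)"
proof (induction w arbitrary: x)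
  case Nil then show ?case by (simp add: mequiv_refl)
next
  case (Cons p w)
  obtain a d where p: "p = (a,d)" by force
  define x' where "x' = (if d then gtgt G a else gsrc G a)"
  have v: "wvalid G W x' w y" and aW: "a \<in> W"
    using Cons.prems unfolding p x'_def by (auto simp: wvalid_Cons split: if_splits)
  have ih: "mequiv G W (x', w @ wrev w, x') (x', [], x')" using Cons.IH[OF v] .
  have vv: "wvalid G W x' (w @ wrev w) x'" using v wrev_valid by (auto simp: wvalid_append)
  have u: "wvalid G W x [(a,d)] x'" "wvalid G W x' [(a, \<not> d)] x"
    using Cons.prems wvalid_obj[OF v] unfolding p x'_def by (auto simp: wvalid_Cons split: if_splits)
  have "mequiv G W (x, [(a,d)] @ (w @ wrev w) @ [(a, \<not> d)], x) (x, [(a,d)] @ [] @ [(a, \<not> d)], x)"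
    by (rule mequiv_ctx[OF ih vv u])
  moreover have "mstep G W (x, [] @ [(a,d), (a, \<not> d)] @ [], x) (x, [] @ [], x)"
    apply (rule mstep.cancel) using u wvalid_append[of x "[(a,d)]" "[(a,\<not> d)]" x] by auto
  then have "mequiv G W (x, [(a,d), (a, \<not> d)], x) (x, [], x)"
    unfolding mequiv_def by auto
  ultimately show ?case unfolding p using mequiv_trans by simp
qed


lemma inv_class:
  assumes "wvalid G W x w y"
  shows "ginv (monodromy G W) (mclass G W (x, w, y)) = mclass G W (y, wrev w, x)"
proof -
  obtain w1 where w1: "mrep (mclass G W (x, w, y)) = (x, w1, y)" "wvalid G W x w1 y"
      "mequiv G W (x, w, y) (x, w1, y)" using mrep_class[OF assms(1)] by blast
  have r1: "wvalid G W y (wrev w1) x" "wvalid G W y (wrev w) x"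
    using wrev_valid w1(2) assms by auto
  have ox: "wvalid G W x [] x" "wvalid G W y [] y" using wvalid_obj assms by auto
  have vv: "wvalid G W x (w @ wrev w) x" using assms r1 wvalid_append by blast
  have e1: "mequiv G W (y, wrev w1 @ (w @ wrev w) @ [], x) (y, wrev w1 @ [] @ [], x)"
    by (rule mequiv_ctx[OF cancel_wrev[OF assms] vv r1(1) ox(1)])
  have e2: "mequiv G W (y, wrev w1 @ w @ wrev w, x) (y, wrev w1 @ w1 @ wrev w, x)"
    by (rule mequiv_ctx[OF w1(3) assms r1(1) r1(2)])
  have c3: "mequiv G W (y, wrev w1 @ wrev (wrev w1), y) (y, [], y)"
    by (rule cancel_wrev[OF r1(1)])
  have vv3: "wvalid G W y (wrev w1 @ wrev (wrev w1)) y" using r1(1) wrev_valid wvalid_append by blast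
  have e3: "mequiv G W (y, [] @ (wrev w1 @ wrev (wrev w1)) @ wrev w, x) (y, [] @ [] @ wrev w, x)"
    by (rule mequiv_ctx[OF c3 vv3 ox(2) r1(2)])
  have "mequiv G W (y, wrev w1, x) (y, wrev w, x)"
  proof -
    have f1: "mequiv G W (y, wrev w1 @ w @ wrev w, x) (y, wrev w1, x)" using e1 by simp
    have f3: "mequiv G W (y, wrev w1 @ w1 @ wrev w, x) (y, wrev w, x)"
      using e3 by (simp add: wrev_wrev del: wrev.simps)
    show ?thesis using mequiv_trans[OF mequiv_trans[OF mequiv_sym[OF f1] e2] f3] .
  qed
  then show ?thesis using w1 by (simp add: monodromy_def mclass_eq del: wrev.simps)
qed

lemma garr_M: "C \<in> garr (monodromy G W) \<Longrightarrow> \<exists>x w y. C = mclass G W (x, w, y) \<and> wvalid G W x w y"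
  by (auto simp: monodromy_def wpaths_def)

lemma class_in_M: "wvalid G W x w y \<Longrightarrow> mclass G W (x, w, y) \<in> garr (monodromy G W)"
  by (auto simp: monodromy_def wpaths_def)

lemma is_groupoid_M: "is_groupoid (monodromy G W)"
  unfolding is_groupoid_def
proof (intro conjI ballI impI)
  fix a assume "a \<in> garr (monodromy G W)"
  then obtain x w y where a: "a = mclass G W (x, w, y)" "wvalid G W x w y" using garr_M by blast
  show "gsrc (monodromy G W) a \<in> gobj (monodromy G W)" "gtgt (monodromy G W) a \<in> gobj (monodromy G W)"
    using a src_class tgt_class wvalid_obj by (auto simp: monodromy_def)
next
  fix x assume x: "x \<in> gobj (monodromy G W)"
  then have v: "wvalid G W x [] x" by (simp add: monodromy_def)
  show "gid (monodromy G W) x \<in> garr (monodromy G W)"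
    using class_in_M[OF v] by (simp add: monodromy_def)
  show "gsrc (monodromy G W) (gid (monodromy G W) x) = x" "gtgt (monodromy G W) (gid (monodromy G W) x) = x"
    using src_class[OF v] tgt_class[OF v] by (simp_all add: monodromy_def)
next
  fix a b assume "a \<in> garr (monodromy G W)" "b \<in> garr (monodromy G W)"
    and ab: "gtgt (monodromy G W) a = gsrc (monodromy G W) b"
  then obtain x w y x' v z where a: "a = mclass G W (x, w, y)" "wvalid G W x w y"
     and b: "b = mclass G W (x', v, z)" "wvalid G W x' v z" using garr_M by metis
  have "x' = y" using ab a b src_class tgt_class by simp
  then have b: "b = mclass G W (y, v, z)" "wvalid G W y v z" using b by auto
  have wv: "wvalid G W x (w @ v) z" using a b wvalid_append by blast
  show "gmul (monodromy G W) a b \<in> garr (monodromy G W)"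
    "gsrc (monodromy G W) (gmul (monodromy G W) a b) = gsrc (monodromy G W) a"
    "gtgt (monodromy G W) (gmul (monodromy G W) a b) = gtgt (monodromy G W) b"
    using mul_class[OF a(2) b(2)] class_in_M[OF wv] src_class[OF wv] tgt_class[OF wv]
      a b src_class tgt_class by simp_all
next
  fix a b c assume "a \<in> garr (monodromy G W)" "b \<in> garr (monodromy G W)" "c \<in> garr (monodromy G W)"
    and abc: "gtgt (monodromy G W) a = gsrc (monodromy G W) b \<and> gtgt (monodromy G W) b = gsrc (monodromy G W) c"
  then obtain x w y x' v z x'' t r where a: "a = mclass G W (x, w, y)" "wvalid G W x w y"
     and b: "b = mclass G W (x', v, z)" "wvalid G W x' v z"
     and c: "c = mclass G W (x'', t, r)" "wvalid G W x'' t r" using garr_M by metis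
  have "x' = y" "x'' = z" using abc a b c src_class tgt_class by simp_all
  then have b: "b = mclass G W (y, v, z)" "wvalid G W y v z"
    and c: "c = mclass G W (z, t, r)" "wvalid G W z t r" using b c by auto
  have wv: "wvalid G W x (w @ v) z" "wvalid G W y (v @ t) r" using a b c wvalid_append by blast+
  show "gmul (monodromy G W) (gmul (monodromy G W) a b) c = gmul (monodromy G W) a (gmul (monodromy G W) b c)"
    using mul_class[OF a(2) b(2)] mul_class[OF b(2) c(2)] mul_class[OF wv(1) c(2)]
      mul_class[OF a(2) wv(2)] a b c by simp
next
  fix a assume "a \<in> garr (monodromy G W)"
  then obtain x w y where a: "a = mclass G W (x, w, y)" "wvalid G W x w y" using garr_M by blast
  have ox: "wvalid G W x [] x" "wvalid G W y [] y" using wvalid_obj a by auto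
  have ri: "wvalid G W y (wrev w) x" using wrev_valid a by blast
  have ii: "gid (monodromy G W) x = mclass G W (x, [], x)" "gid (monodromy G W) y = mclass G W (y, [], y)"
    by (simp_all add: monodromy_def)
  show "gmul (monodromy G W) (gid (monodromy G W) (gsrc (monodromy G W) a)) a = a"
    using mul_class[OF ox(1) a(2)] a src_class ii by simp
  show "gmul (monodromy G W) a (gid (monodromy G W) (gtgt (monodromy G W) a)) = a"
    using mul_class[OF a(2) ox(2)] a tgt_class ii by simp
  show "ginv (monodromy G W) a \<in> garr (monodromy G W)"
    "gsrc (monodromy G W) (ginv (monodromy G W) a) = gtgt (monodromy G W) a"
    "gtgt (monodromy G W) (ginv (monodromy G W) a) = gsrc (monodromy G W) a"
    using inv_class[OF a(2)] class_in_M[OF ri] src_class[OF ri] tgt_class[OF ri] a src_class tgt_class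
    by (simp_all del: wrev.simps)
  have c1: "mclass G W (x, w @ wrev w, x) = mclass G W (x, [], x)"
    using cancel_wrev[OF a(2)] mclass_eq by blast
  have c2: "mclass G W (y, wrev w @ wrev (wrev w), y) = mclass G W (y, [], y)"
    using cancel_wrev[OF ri] mclass_eq by blast
  show "gmul (monodromy G W) a (ginv (monodromy G W) a) = gid (monodromy G W) (gsrc (monodromy G W) a)"
    using mul_class[OF a(2) ri] inv_class[OF a(2)] a src_class ii c1 by (simp del: wrev.simps)
  show "gmul (monodromy G W) (ginv (monodromy G W) a) a = gid (monodromy G W) (gtgt (monodromy G W) a)"
    using mul_class[OF ri a(2)] inv_class[OF a(2)] a tgt_class ii c2 by (simp add: wrev_wrev del: wrev.simps)
qed


lemma unit_class:
  assumes x: "x \<in> gobj G" and iW: "gid G x \<in> W"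
  shows "mclass G W (x, [(gid G x, True)], x) = mclass G W (x, [], x)"
proof -
  let ?e = "gid G x"
  have ge: "gsrc G ?e = x" "gtgt G ?e = x" "gmul G ?e ?e = ?e"
    using grp x unfolding is_groupoid_def by (metis subsetD WG iW)+
  have v0: "wvalid G W x ([(?e, True)] @ [(?e, True), (?e, \<not> True)] @ []) x"
    using ge iW x by simp
  have s1: "mstep G W (x, [(?e, True)] @ [(?e, True), (?e, \<not> True)] @ [], x) (x, [(?e, True)] @ [], x)"
    by (rule mstep.cancel[OF v0])
  have v1: "wvalid G W x ([] @ [(?e, True), (?e, True)] @ [(?e, False)]) x"
    using ge iW x by simp
  have s2: "mstep G W (x, [] @ [(?e, True), (?e, True)] @ [(?e, False)], x) (x, [] @ [(gmul G ?e ?e, True)] @ [(?e, False)], x)"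
    by (rule mstep.compose[OF v1]) (simp add: ge iW)
  have v2: "wvalid G W x ([] @ [(?e, True), (?e, \<not> True)] @ []) x"
    using ge iW x by simp
  have s3: "mstep G W (x, [] @ [(?e, True), (?e, \<not> True)] @ [], x) (x, [] @ [], x)"
    by (rule mstep.cancel[OF v2])
  have "mequiv G W (x, [(?e, True), (?e, True), (?e, False)], x) (x, [(?e, True)], x)"
    using s1 unfolding mequiv_def by auto
  moreover have "mequiv G W (x, [(?e, True), (?e, True), (?e, False)], x) (x, [(?e, True), (?e, False)], x)"
    using s2 ge unfolding mequiv_def by auto
  moreover have "mequiv G W (x, [(?e, True), (?e, False)], x) (x, [], x)"
    using s3 unfolding mequiv_def by auto
  ultimately have "mequiv G W (x, [(?e, True)], x) (x, [], x)"
    using mequiv_sym mequiv_trans by meson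
  then show ?thesis by (rule mclass_eq)
qed

end

theorem mainTheorem2:
  fixes TG :: "'g topology" and TX :: "'x topology"
    and G :: "('x, 'g) groupoid"
    and I :: "'i set" and U :: "'i \<Rightarrow> 'x set" and s :: "'x \<Rightarrow> 'i \<Rightarrow> 'x \<Rightarrow> 'g"
    and W :: "'g set"
  assumes "topological_groupoid TG TX G"
    and "compatible_locally_trivial_wrt TX G I U s"
    and "openin TG W"
    and "\<forall>x\<in>gobj G. gid G x \<in> W"
    and "\<forall>i\<in>I. \<forall>x\<in>U i. s x i ` U i \<subseteq> W"
  shows "\<exists>(I' :: 'i set) U' s'. compatible_locally_trivial_wrt TX (monodromy G W) I' U' s'"
proof -
  have grp: "is_groupoid G" using assms(1) unfolding topological_groupoid_def by blast
  have WG: "W \<subseteq> garr G" using assms(1,3) openin_subset unfolding topological_groupoid_def by blast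
  note C = assms(2)[unfolded compatible_locally_trivial_wrt_def]
  define s' where "s' = (\<lambda>x i y. mclass G W (x, [(s x i y, True)], y))"
  have Uobj: "\<And>i y. i \<in> I \<Longrightarrow> y \<in> U i \<Longrightarrow> y \<in> gobj G" using C by blast
  have val: "wvalid G W x [(s x i y, True)] y" if "i \<in> I" "x \<in> U i" "y \<in> U i" for i x y
    using that C assms(5) Uobj by auto
  have "compatible_locally_trivial_wrt TX (monodromy G W) I U s'"
    unfolding compatible_locally_trivial_wrt_def
  proof (intro conjI)
    show "is_groupoid (monodromy G W)" by (rule is_groupoid_M[OF grp WG])
    show "gobj (monodromy G W) = topspace TX" using C by (simp add: monodromy_def)
    show "\<forall>i\<in>I. openin TX (U i)" "(\<Union>i\<in>I. U i) = topspace TX"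
      "\<forall>V. openin TX V \<longrightarrow> (\<forall>x\<in>V. \<exists>i\<in>I. x \<in> U i \<and> U i \<subseteq> V)" using C by blast+
    show "\<forall>i\<in>I. \<forall>x\<in>U i. (\<forall>y\<in>U i. s' x i y \<in> garr (monodromy G W) \<and>
        gsrc (monodromy G W) (s' x i y) = x \<and> gtgt (monodromy G W) (s' x i y) = y) \<and>
        s' x i x = gid (monodromy G W) x"
    proof (intro ballI conjI)
      fix i x y assume i: "i \<in> I" and x: "x \<in> U i" and y: "y \<in> U i"
      show "s' x i y \<in> garr (monodromy G W)" "gsrc (monodromy G W) (s' x i y) = x"
        "gtgt (monodromy G W) (s' x i y) = y"
        unfolding s'_def using class_in_M[OF grp WG val[OF i x y]]
          src_class[OF grp WG val[OF i x y]] tgt_class[OF grp WG val[OF i x y]] by auto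
    next
      fix i x assume i: "i \<in> I" and x: "x \<in> U i"
      have "s x i x = gid G x" using C i x by blast
      then show "s' x i x = gid (monodromy G W) x"
        unfolding s'_def using unit_class[OF grp WG Uobj[OF i x]] assms(4) Uobj[OF i x]
        by (simp add: monodromy_def)
    qed
    show "\<forall>x\<in>topspace TX. \<forall>i\<in>I. \<forall>j\<in>I. x \<in> U i \<and> x \<in> U j \<longrightarrow>
        (\<exists>k\<in>I. x \<in> U k \<and> U k \<subseteq> U i \<inter> U j \<and> (\<forall>y\<in>U k. s' x i y = s' x j y))"
      unfolding s'_def using C by metis
  qed
  then show ?thesis by blast
qed

end
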